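(* Let $E$ be a bounded spectral family in a $\sigma$-complete orthomodular lattice $\mathbb{L}$. Then the function $f_E:\mathcal{Q}(\mathbb{L})\to\mathbb{R}$, $f_E(\mathfrak{B}):=\inf\{\lambda\in\mathbb{R}\mid E_\lambda\in\mathfrak{B}\}$, is continuous.
   Context: A spectral family in a $\sigma$-complete lattice $\mathbb{L}$ (with $0$ and $1$) is a map $E:\mathbb{R}\to\mathbb{L}$ with (1) $E_\lambda\le E_\mu$ for $\lambda\le\mu$; (2) $E_\lambda=\bigwedge_{\mu>\lambda}E_\mu$; (3) $\bigwedge_\lambda E_\lambda=0$, $\bigvee_\lambda E_\lambda=1$. $E$ is bounded if there are $a\le b$ with $E_\lambda=0$ for $\lambda<a$ and $E_\lambda=1$ for $\lambda\ge b$. A quasipoint of $\mathbb{L}$ is a maximal dual ideal (a dual ideal being a nonempty, upward closed subset not containing $0$ and closed under finite meets). The Stone spectrum $\mathcal{Q}(\mathbb{L})$ is the set of quasipoints with topology generated by the base $\mathcal{Q}_a(\mathbb{L})=\{\mathfrak{B}\mid a\in\mathfrak{B}\}$, $a\in\mathbb{L}$. *)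

theory Defs
  imports "HOL-Analysis.Analysis"
begin

text \<open>Lattice-theoretic infima/suprema of arbitrary subsets (they need not exist in general).\<close>

definition is_infimum :: "'a::order \<Rightarrow> 'a set \<Rightarrow> bool" where
  "is_infimum x S \<longleftrightarrow> (\<forall>s\<in>S. x \<le> s) \<and> (\<forall>y. (\<forall>s\<in>S. y \<le> s) \<longrightarrow> y \<le> x)"

definition is_supremum :: "'a::order \<Rightarrow> 'a set \<Rightarrow> bool" where
  "is_supremum x S \<longleftrightarrow> (\<forall>s\<in>S. s \<le> x) \<and> (\<forall>y. (\<forall>s\<in>S. s \<le> y) \<longrightarrow> x \<le> y)"

definition sigma_complete :: "'a::bounded_lattice itself \<Rightarrow> bool" where
  "sigma_complete _ \<longleftrightarrow>
     (\<forall>S::'a set. countable S \<longrightarrow> (\<exists>x. is_supremum x S) \<and> (\<exists>x. is_infimum x S))"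

definition orthomodular :: "('a::bounded_lattice \<Rightarrow> 'a) \<Rightarrow> bool" where
  "orthomodular oc \<longleftrightarrow>
     (\<forall>x. inf x (oc x) = bot) \<and> (\<forall>x. sup x (oc x) = top) \<and>
     (\<forall>x. oc (oc x) = x) \<and> (\<forall>x y. x \<le> y \<longrightarrow> oc y \<le> oc x) \<and>
     (\<forall>x y. x \<le> y \<longrightarrow> y = sup x (inf y (oc x)))"

definition spectral_family :: "(real \<Rightarrow> 'a::bounded_lattice) \<Rightarrow> bool" where
  "spectral_family E \<longleftrightarrow>
     (\<forall>l m. l \<le> m \<longrightarrow> E l \<le> E m) \<and>
     (\<forall>l. is_infimum (E l) {E m | m. m > l}) \<and>
     is_infimum bot (range E) \<and> is_supremum top (range E)"

definition bounded_spectral_family :: "(real \<Rightarrow> 'a::bounded_lattice) \<Rightarrow> bool" where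
  "bounded_spectral_family E \<longleftrightarrow> spectral_family E \<and>
     (\<exists>a b. a \<le> b \<and> (\<forall>l. l < a \<longrightarrow> E l = bot) \<and> (\<forall>l. l \<ge> b \<longrightarrow> E l = top))"

definition dual_ideal :: "'a::bounded_lattice set \<Rightarrow> bool" where
  "dual_ideal F \<longleftrightarrow> F \<noteq> {} \<and> bot \<notin> F \<and>
     (\<forall>x y. x \<in> F \<and> x \<le> y \<longrightarrow> y \<in> F) \<and> (\<forall>x y. x \<in> F \<and> y \<in> F \<longrightarrow> inf x y \<in> F)"

definition quasipoint :: "'a::bounded_lattice set \<Rightarrow> bool" where
  "quasipoint B \<longleftrightarrow> dual_ideal B \<and> (\<forall>C. dual_ideal C \<and> B \<subseteq> C \<longrightarrow> C = B)"

definition quasipoints :: "'a::bounded_lattice set set" where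
  "quasipoints = {B. quasipoint B}"

definition Q_base :: "'a::bounded_lattice \<Rightarrow> 'a set set" where
  "Q_base a = {B. quasipoint B \<and> a \<in> B}"

definition stone_spectrum :: "'a::bounded_lattice set topology" where
  "stone_spectrum = topology_generated_by (range Q_base)"

definition observable_fun :: "(real \<Rightarrow> 'a::bounded_lattice) \<Rightarrow> 'a set \<Rightarrow> real" where
  "observable_fun E B = Inf {l. E l \<in> B}"

end

theory Submission
  imports Defs
begin

lemma qp_top: "quasipoint B \<Longrightarrow> top \<in> B"
  unfolding quasipoint_def dual_ideal_def by auto

lemma qp_not_mem:
  fixes B :: "'a::bounded_lattice set"
  assumes q: "quasipoint B" and a: "a \<notin> B"
  shows "\<exists>b\<in>B. inf a b = bot"
proof (rule ccontr)
  assume H: "\<not> (\<exists>b\<in>B. inf a b = bot)"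
  define C where "C = {c. \<exists>b\<in>B. inf a b \<le> c}"
  have d: "dual_ideal B" using q unfolding quasipoint_def by auto
  have tB: "top \<in> B" using qp_top[OF q] .
  have "dual_ideal C"
    unfolding dual_ideal_def
  proof (intro conjI allI impI)
    show "C \<noteq> {}" using tB unfolding C_def by auto
    show "bot \<notin> C" using H unfolding C_def by (auto simp: bot_unique)
  next
    fix x y assume "x \<in> C \<and> x \<le> y" then show "y \<in> C"
      unfolding C_def by (auto intro: order_trans)
  next
    fix x y assume "x \<in> C \<and> y \<in> C"
    then obtain b1 b2 where b: "b1 \<in> B" "b2 \<in> B" "inf a b1 \<le> x" "inf a b2 \<le> y"
      unfolding C_def by auto
    have ib: "inf b1 b2 \<in> B" using d b unfolding dual_ideal_def by auto
    have l1: "inf a (inf b1 b2) \<le> inf a b1" by (rule inf_mono) simp_all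
    have l2: "inf a (inf b1 b2) \<le> inf a b2" by (rule inf_mono) simp_all
    have ii: "inf a (inf b1 b2) \<le> inf x y"
      using order_trans[OF l1 b(3)] order_trans[OF l2 b(4)] by (rule le_infI)
    show "inf x y \<in> C" using ib ii unfolding C_def by auto
  qed
  moreover have "B \<subseteq> C" unfolding C_def using inf_le2 by blast
  ultimately have "C = B" using q unfolding quasipoint_def by auto
  moreover have "a \<in> C" using tB unfolding C_def by auto
  ultimately show False using a by auto
qed

lemma open_gen:
  assumes "\<And>x. x \<in> U \<Longrightarrow> \<exists>a. x \<in> Q_base a \<and> Q_base a \<subseteq> U"
  shows "openin stone_spectrum U"
proof -
  have "U = \<Union>{Q_base a | a. Q_base a \<subseteq> U}" using assms by blast
  moreover have "generate_topology_on (range Q_base) (\<Union>{Q_base a | a. Q_base a \<subseteq> U})"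
    by (rule generate_topology_on.UN) (auto intro: generate_topology_on.Basis)
  ultimately show ?thesis
    unfolding stone_spectrum_def openin_topology_generated_by_iff by simp
qed

theorem proposition2p8:
  fixes oc :: "'a::bounded_lattice \<Rightarrow> 'a" and E :: "real \<Rightarrow> 'a"
  assumes "sigma_complete TYPE('a)"
    and "orthomodular oc"
    and "bounded_spectral_family E"
  shows "continuous_map stone_spectrum euclideanreal (observable_fun E)"
proof -
  obtain a0 b0 where ab: "\<And>l. l < a0 \<Longrightarrow> E l = bot" "\<And>l. l \<ge> b0 \<Longrightarrow> E l = top"
    and mono: "\<And>l m. l \<le> m \<Longrightarrow> E l \<le> E m"
    using assms(3) unfolding bounded_spectral_family_def spectral_family_def by blast
  have ts: "topspace stone_spectrum = {B. quasipoint B}"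
    unfolding stone_spectrum_def Q_base_def using qp_top by auto
  have ne: "b0 \<in> {l. E l \<in> B}" if "quasipoint B" for B :: "'a set"
    using ab(2)[of b0] qp_top[OF that] by auto
  have bdd: "bdd_below {l. E l \<in> B}" if "quasipoint B" for B :: "'a set"
  proof (rule bdd_belowI[of _ a0])
    fix l assume "l \<in> {l. E l \<in> B}"
    then show "a0 \<le> l" using ab(1)[of l] that unfolding quasipoint_def dual_ideal_def
      by (metis mem_Collect_eq not_le)
  qed
  have upc: "\<And>B x y. quasipoint B \<Longrightarrow> x \<in> B \<Longrightarrow> x \<le> y \<Longrightarrow> y \<in> B"
    unfolding quasipoint_def dual_ideal_def by blast
  show ?thesis
    unfolding continuous_map_upper_lower_semicontinuous_lt
  proof (intro conjI allI)
    fix r :: real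
    show "openin stone_spectrum {x \<in> topspace stone_spectrum. observable_fun E x < r}"
    proof (rule open_gen)
      fix B assume "B \<in> {x \<in> topspace stone_spectrum. observable_fun E x < r}"
      then have q: "quasipoint B" and lt: "Inf {l. E l \<in> B} < r"
        using ts unfolding observable_fun_def by auto
      then obtain l where l: "E l \<in> B" "l < r"
        using cInf_lessD[OF _ lt] ne[OF q] by blast
      show "\<exists>a. B \<in> Q_base a \<and> Q_base a \<subseteq> {x \<in> topspace stone_spectrum. observable_fun E x < r}"
      proof (intro exI conjI)
        show "B \<in> Q_base (E l)" using q l unfolding Q_base_def by auto
        show "Q_base (E l) \<subseteq> {x \<in> topspace stone_spectrum. observable_fun E x < r}"
        proof
          fix C assume "C \<in> Q_base (E l)"
          then have qc: "quasipoint C" and "E l \<in> C" unfolding Q_base_def by auto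
          then have "Inf {l. E l \<in> C} \<le> l" by (intro cInf_lower bdd) auto
          then show "C \<in> {x \<in> topspace stone_spectrum. observable_fun E x < r}"
            using qc ts l unfolding observable_fun_def by auto
        qed
      qed
    qed
  next
    fix r :: real
    show "openin stone_spectrum {x \<in> topspace stone_spectrum. observable_fun E x > r}"
    proof (rule open_gen)
      fix B assume "B \<in> {x \<in> topspace stone_spectrum. observable_fun E x > r}"
      then have q: "quasipoint B" and gt: "Inf {l. E l \<in> B} > r"
        using ts unfolding observable_fun_def by auto
      obtain mu where mu: "r < mu" "mu < Inf {l. E l \<in> B}" using gt dense by blast
      have "E mu \<notin> B"
      proof
        assume "E mu \<in> B"
        then have "Inf {l. E l \<in> B} \<le> mu" by (intro cInf_lower bdd q) auto
        then show False using mu by simp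
      qed
      then obtain b where b: "b \<in> B" "inf (E mu) b = bot" using qp_not_mem[OF q] by blast
      show "\<exists>a. B \<in> Q_base a \<and> Q_base a \<subseteq> {x \<in> topspace stone_spectrum. observable_fun E x > r}"
      proof (intro exI conjI)
        show "B \<in> Q_base b" using q b unfolding Q_base_def by auto
        show "Q_base b \<subseteq> {x \<in> topspace stone_spectrum. observable_fun E x > r}"
        proof
          fix C assume "C \<in> Q_base b"
          then have qc: "quasipoint C" and bc: "b \<in> C" unfolding Q_base_def by auto
          have "mu \<le> Inf {l. E l \<in> C}"
          proof (rule cInf_greatest)
            show "{l. E l \<in> C} \<noteq> {}" using ne[OF qc] by auto
          next
            fix l assume "l \<in> {l. E l \<in> C}"
            then have el: "E l \<in> C" by simp
            show "mu \<le> l"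
            proof (rule ccontr)
              assume "\<not> mu \<le> l"
              then have "E mu \<in> C" using upc[OF qc el mono[of l mu]] by simp
              then have "inf (E mu) b \<in> C" using bc qc unfolding quasipoint_def dual_ideal_def by blast
              then show False using b qc unfolding quasipoint_def dual_ideal_def by auto
            qed
          qed
          then show "C \<in> {x \<in> topspace stone_spectrum. observable_fun E x > r}"
            using qc ts mu unfolding observable_fun_def by auto
        qed
      qed
    qed
  qed
qed

end
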